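(* Let $m$ be a positive integer, $\gamma\in C^m(\mathbb{R},\mathbb{R}^3)$, and $K\subseteq\mathbb{R}$ a compact set containing at least $m+1$ points and having finitely many isolated points. If $\gamma$ satisfies the discrete $A/V$ condition on $K$, then $\gamma$ satisfies the $A/V$ condition on $K$. Moreover, if $m=1$, the same conclusion holds for any compact $K\subseteq\mathbb{R}$ containing at least $2$ points.
   Context: $C^m(\mathbb{R},\mathbb{R}^3)$: curves whose components are $m$-times continuously differentiable with bounded $m$th derivative. For $\gamma=(f,g,h)$ and $a\in\mathbb{R}$, $T_af(x)=\sum_{k=0}^m\frac{f^{(k)}(a)}{k!}(x-a)^k$ (similarly $T_ag$); $A(\gamma;a,b)= h(b)-h(a)-2\int_a^b\big((T_af)'T_ag-(T_ag)'T_af\big) + 2f(a)(g(b)-T_ag(b)) - 2g(a)(f(b)-T_af(b))$, $V(\gamma;a,b)=(b-a)^{2m}+(b-a)^m\int_a^b(|(T_af)'|+|(T_ag)'|)$. $\gamma$ satisfies the $A/V$ condition on $E$ if for every $\varepsilon>0$ there is $\delta>0$ with $|A(\gamma;a,b)/V(\gamma;a,b)|<\varepsilon$ for all $a,b\in E$ with $0<b-a<\delta$. For $X$ a set of $m+1$ distinct points, $P(X;\phi)$ is the unique polynomial of degree $\le m$ agreeing with $\phi$ on $X$; $P_f=P(X;f)$, $P_g=P(X;g)$, and for $a,b\in X$: $A[X,\gamma;a,b]=h(b)-h(a)-2\int_a^b(P_f'P_g-P_g'P_f)$, $V[X,\gamma;a,b]=\operatorname{diam}(X)^{2m}+\operatorname{diam}(X)^m\int_a^b(|P_f'|+|P_g'|)$.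 $\gamma$ satisfies the discrete $A/V$ condition on $E$ if for every $\varepsilon>0$ there is $\delta>0$ such that $|A[X,\gamma;a,b]/V[X,\gamma;a,b]|<\varepsilon$ for all $X\subseteq E$ with $\#X=m+1$, $\operatorname{diam}X<\delta$, and $a,b\in X$ with $a<b$. *)

theory Defs
  imports "HOL-Analysis.Analysis" "HOL-Computational_Algebra.Polynomial"
begin

definition Cm :: "nat \<Rightarrow> (real \<Rightarrow> real) \<Rightarrow> bool" where
  "Cm m \<phi> \<longleftrightarrow> (\<forall>k<m. \<forall>x. ((deriv ^^ k) \<phi>) differentiable (at x))
     \<and> continuous_on UNIV ((deriv ^^ m) \<phi>)
     \<and> bounded (range ((deriv ^^ m) \<phi>))"

definition taylorT :: "nat \<Rightarrow> real \<Rightarrow> (real \<Rightarrow> real) \<Rightarrow> real \<Rightarrow> real" where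
  "taylorT m a \<phi> x = (\<Sum>k\<le>m. (deriv ^^ k) \<phi> a / fact k * (x - a) ^ k)"

definition AVA :: "nat \<Rightarrow> (real \<Rightarrow> real) \<Rightarrow> (real \<Rightarrow> real) \<Rightarrow> (real \<Rightarrow> real) \<Rightarrow> real \<Rightarrow> real \<Rightarrow> real" where
  "AVA m f g h a b =
     h b - h a
     - 2 * integral {a..b} (\<lambda>x. deriv (taylorT m a f) x * taylorT m a g x
                              - deriv (taylorT m a g) x * taylorT m a f x)
     + 2 * f a * (g b - taylorT m a g b) - 2 * g a * (f b - taylorT m a f b)"

definition AVV :: "nat \<Rightarrow> (real \<Rightarrow> real) \<Rightarrow> (real \<Rightarrow> real) \<Rightarrow> real \<Rightarrow> real \<Rightarrow> real" where
  "AVV m f g a b =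
     (b - a) ^ (2 * m)
     + (b - a) ^ m * integral {a..b} (\<lambda>x. \<bar>deriv (taylorT m a f) x\<bar> + \<bar>deriv (taylorT m a g) x\<bar>)"

definition AV_condition :: "nat \<Rightarrow> (real \<Rightarrow> real) \<Rightarrow> (real \<Rightarrow> real) \<Rightarrow> (real \<Rightarrow> real) \<Rightarrow> real set \<Rightarrow> bool" where
  "AV_condition m f g h E \<longleftrightarrow>
     (\<forall>\<epsilon>>0. \<exists>\<delta>>0. \<forall>a\<in>E. \<forall>b\<in>E. 0 < b - a \<and> b - a < \<delta> \<longrightarrow>
        \<bar>AVA m f g h a b / AVV m f g a b\<bar> < \<epsilon>)"

definition interp :: "nat \<Rightarrow> real set \<Rightarrow> (real \<Rightarrow> real) \<Rightarrow> real poly" where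
  "interp m X \<phi> = (THE p. degree p \<le> m \<and> (\<forall>x\<in>X. poly p x = \<phi> x))"

definition dA :: "nat \<Rightarrow> real set \<Rightarrow> (real \<Rightarrow> real) \<Rightarrow> (real \<Rightarrow> real) \<Rightarrow> (real \<Rightarrow> real) \<Rightarrow> real \<Rightarrow> real \<Rightarrow> real" where
  "dA m X f g h a b =
     h b - h a
     - 2 * integral {a..b} (\<lambda>x. poly (pderiv (interp m X f)) x * poly (interp m X g) x
                              - poly (pderiv (interp m X g)) x * poly (interp m X f) x)"

definition dV :: "nat \<Rightarrow> real set \<Rightarrow> (real \<Rightarrow> real) \<Rightarrow> (real \<Rightarrow> real) \<Rightarrow> real \<Rightarrow> real \<Rightarrow> real" where
  "dV m X f g a b =
     diameter X ^ (2 * m)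
     + diameter X ^ m * integral {a..b} (\<lambda>x. \<bar>poly (pderiv (interp m X f)) x\<bar> + \<bar>poly (pderiv (interp m X g)) x\<bar>)"

definition discrete_AV_condition :: "nat \<Rightarrow> (real \<Rightarrow> real) \<Rightarrow> (real \<Rightarrow> real) \<Rightarrow> (real \<Rightarrow> real) \<Rightarrow> real set \<Rightarrow> bool" where
  "discrete_AV_condition m f g h E \<longleftrightarrow>
     (\<forall>\<epsilon>>0. \<exists>\<delta>>0. \<forall>X. X \<subseteq> E \<and> finite X \<and> card X = m + 1 \<and> diameter X < \<delta> \<longrightarrow>
        (\<forall>a\<in>X. \<forall>b\<in>X. a < b \<longrightarrow> \<bar>dA m X f g h a b / dV m X f g a b\<bar> < \<epsilon>))"

end

theory Submission
  imports Defs
begin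

definition lagr :: "real set \<Rightarrow> real \<Rightarrow> real poly" where
  "lagr X j = smult (inverse (\<Prod>k\<in>X-{j}. (j - k))) (\<Prod>k\<in>X-{j}. [:-k, 1:])"

definition lint :: "real set \<Rightarrow> (real \<Rightarrow> real) \<Rightarrow> real poly" where
  "lint X \<phi> = (\<Sum>j\<in>X. smult (\<phi> j) (lagr X j))"

lemma poly_lagr: "poly (lagr X j) x = (\<Prod>k\<in>X-{j}. (x - k)) / (\<Prod>k\<in>X-{j}. (j - k))"
  by (simp add: lagr_def poly_prod field_simps)

lemma lagr_self: "finite X \<Longrightarrow> poly (lagr X j) j = 1"
proof -
  assume "finite X"
  have "(\<Prod>k\<in>X-{j}. (j - k)) \<noteq> 0" using \<open>finite X\<close> by (subst prod_zero_iff) auto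
  thus ?thesis by (simp add: poly_lagr)
qed

lemma lagr_other: "finite X \<Longrightarrow> i \<in> X \<Longrightarrow> i \<noteq> j \<Longrightarrow> poly (lagr X j) i = 0"
proof -
  assume "finite X" "i \<in> X" "i \<noteq> j"
  have "(\<Prod>k\<in>X-{j}. (i - k)) = 0" using \<open>finite X\<close> \<open>i \<in> X\<close> \<open>i \<noteq> j\<close>
    by (subst prod_zero_iff) auto
  thus ?thesis by (simp add: poly_lagr)
qed

lemma degree_lagr: "finite X \<Longrightarrow> j \<in> X \<Longrightarrow> degree (lagr X j) \<le> card X - 1"
proof -
  assume fin: "finite X" and jX: "j \<in> X"
  have "degree (lagr X j) \<le> degree (\<Prod>k\<in>X-{j}. [:-k, 1:])"
    unfolding lagr_def by (rule degree_smult_le)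
  also have "\<dots> \<le> sum (degree \<circ> (\<lambda>k. [:-k, 1:])) (X - {j})"
    using fin by (intro degree_prod_sum_le) auto
  also have "\<dots> = card (X - {j})" by simp
  also have "\<dots> \<le> card X - 1" using fin jX by (simp add: card_Diff_singleton_if)
  finally show ?thesis .
qed

lemma poly_lint: "finite X \<Longrightarrow> i \<in> X \<Longrightarrow> poly (lint X \<phi>) i = \<phi> i"
proof -
  assume fin: "finite X" and i: "i \<in> X"
  have "poly (lint X \<phi>) i = (\<Sum>j\<in>X. \<phi> j * poly (lagr X j) i)"
    by (simp add: lint_def poly_sum)
  also have "\<dots> = (\<Sum>j\<in>X. if j = i then \<phi> i else 0)"
    using fin i by (intro sum.cong) (auto simp: lagr_self lagr_other)
  also have "\<dots> = \<phi> i" using fin i by simp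
  finally show ?thesis .
qed

lemma degree_lint: "finite X \<Longrightarrow> degree (lint X \<phi>) \<le> card X - 1"
  unfolding lint_def
  by (intro degree_sum_le) (use degree_lagr[of X] in \<open>auto intro: order.trans[OF degree_smult_le]\<close>)

lemma interp_eq:
  assumes "finite X" "card X = m + 1"
  shows "interp m X \<phi> = lint X \<phi>"
  unfolding interp_def
proof (rule the_equality)
  show "degree (lint X \<phi>) \<le> m \<and> (\<forall>x\<in>X. poly (lint X \<phi>) x = \<phi> x)"
    using assms degree_lint[of X \<phi>] poly_lint[of X] by auto
next
  fix p assume p: "degree p \<le> m \<and> (\<forall>x\<in>X. poly p x = \<phi> x)"
  show "p = lint X \<phi>"
    by (rule poly_eqI_degree[of X]) (use p assms degree_lint[of X \<phi>] poly_lint[of X] in auto)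
qed

lemma pderiv_sum: "pderiv (sum f A) = (\<Sum>x\<in>A. pderiv (f x))"
  by (induction A rule: infinite_finite_induct) (auto simp: pderiv_add)

lemma poly_pderiv_lagr:
  "poly (pderiv (lagr X j)) x =
     (\<Sum>i\<in>X-{j}. \<Prod>k\<in>X-{j}-{i}. (x - k)) / (\<Prod>k\<in>X-{j}. (j - k))"
  by (simp add: lagr_def pderiv_smult pderiv_prod poly_sum poly_prod pderiv_pCons field_simps)

lemma abs_prod_le:
  fixes f :: "real \<Rightarrow> real"
  assumes "\<And>k. k \<in> A \<Longrightarrow> \<bar>f k\<bar> \<le> D"
  shows "\<bar>prod f A\<bar> \<le> D ^ card A"
proof (cases "finite A")
  case True
  have "\<bar>prod f A\<bar> = (\<Prod>k\<in>A. \<bar>f k\<bar>)" by (simp add: abs_prod)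
  also have "\<dots> \<le> (\<Prod>k\<in>A. D)" by (intro prod_mono) (use assms in auto)
  also have "\<dots> = D ^ card A" by simp
  finally show ?thesis .
next
  case False thus ?thesis by simp
qed

lemma abs_prod_ge:
  fixes f :: "real \<Rightarrow> real"
  assumes "\<And>k. k \<in> A \<Longrightarrow> c \<le> \<bar>f k\<bar>" "0 \<le> c" "finite A"
  shows "c ^ card A \<le> \<bar>prod f A\<bar>"
proof -
  have "c ^ card A = (\<Prod>k\<in>A. c)" by simp
  also have "\<dots> \<le> (\<Prod>k\<in>A. \<bar>f k\<bar>)" by (intro prod_mono) (use assms in auto)
  also have "\<dots> = \<bar>prod f A\<bar>" by (simp add: abs_prod)
  finally show ?thesis .
qed

lemma lint_key:
  fixes X :: "real set" and R :: "real \<Rightarrow> real"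
  assumes fin: "finite X" and card: "card X = m+1" and Ra: "R a = 0"
    and sep: "\<And>j k. j \<in> X \<Longrightarrow> k \<in> X \<Longrightarrow> j \<noteq> a \<Longrightarrow> k \<noteq> j \<Longrightarrow> \<bar>j - a\<bar>/2 \<le> \<bar>j - k\<bar>"
    and Rb: "\<And>j. j \<in> X \<Longrightarrow> \<bar>R j\<bar> \<le> e * \<bar>j - a\<bar>^m" and e: "e \<ge> 0"
    and jX: "j \<in> X"
  shows "\<bar>R j\<bar> \<le> e * 2^m * \<bar>\<Prod>k\<in>X-{j}. (j - k)\<bar>"
proof (cases "j = a")
  case True thus ?thesis using Ra e by simp
next
  case False
  have c: "card (X - {j}) = m" using fin card jX by simp
  have "(\<bar>j - a\<bar>/2) ^ card (X - {j}) \<le> \<bar>\<Prod>k\<in>X-{j}. (j - k)\<bar>"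
    by (rule abs_prod_ge) (use sep False jX fin in auto)
  hence "(\<bar>j - a\<bar>/2) ^ m \<le> \<bar>\<Prod>k\<in>X-{j}. (j - k)\<bar>" by (simp add: c)
  hence "e * 2^m * (\<bar>j - a\<bar>/2) ^ m \<le> e * 2^m * \<bar>\<Prod>k\<in>X-{j}. (j - k)\<bar>"
    using e by (intro mult_left_mono) auto
  moreover have "e * 2^m * (\<bar>j - a\<bar>/2) ^ m = e * \<bar>j - a\<bar>^m"
    by (simp add: power_divide)
  ultimately show ?thesis using Rb[OF jX] by linarith
qed

lemma lint_bounds:
  fixes X :: "real set" and R :: "real \<Rightarrow> real"
  assumes fin: "finite X" and card: "card X = m+1" and Ra: "R a = 0"
    and sep: "\<And>j k. j \<in> X \<Longrightarrow> k \<in> X \<Longrightarrow> j \<noteq> a \<Longrightarrow> k \<noteq> j \<Longrightarrow> \<bar>j - a\<bar>/2 \<le> \<bar>j - k\<bar>"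
    and Rb: "\<And>j. j \<in> X \<Longrightarrow> \<bar>R j\<bar> \<le> e * \<bar>j - a\<bar>^m" and e: "e \<ge> 0"
    and D: "\<And>k. k \<in> X \<Longrightarrow> \<bar>x - k\<bar> \<le> D"
  shows "\<bar>poly (lint X R) x\<bar> \<le> (real m + 1) * (e*2^m*D^m)"
    and "\<bar>poly (pderiv (lint X R)) x\<bar> \<le> (real m + 1) * (e*2^m*(m*D^(m-1)))"
proof -
  have key: "\<bar>R j\<bar> \<le> e * 2^m * \<bar>\<Prod>k\<in>X-{j}. (j - k)\<bar>" if "j \<in> X" for j
    by (rule lint_key[OF fin card Ra sep Rb e that]) auto
  have nz: "(\<Prod>k\<in>X-{j}. (j - k)) \<noteq> 0" for j
    using fin by (subst prod_zero_iff) auto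
  have gen: "\<bar>R j * (Q / (\<Prod>k\<in>X-{j}. (j - k)))\<bar> \<le> e*2^m*B"
    if "j \<in> X" "\<bar>Q\<bar> \<le> B" for j Q B
  proof -
    define P where "P = \<bar>\<Prod>k\<in>X-{j}. (j - k)\<bar>"
    have P: "P > 0" using nz[of j] by (simp add: P_def)
    have "\<bar>R j * (Q / (\<Prod>k\<in>X-{j}. (j - k)))\<bar> = \<bar>R j\<bar> * \<bar>Q\<bar> / P"
      by (simp add: P_def abs_mult)
    also have "\<dots> \<le> (e * 2^m * P) * B / P"
      using key[OF that(1)] that(2) P
      by (intro divide_right_mono mult_mono) (auto simp: P_def)
    also have "\<dots> = e*2^m*B" using P by simp
    finally show ?thesis .
  qed
  have B0: "\<bar>\<Prod>k\<in>X-{j}. (x - k)\<bar> \<le> D^m" if "j \<in> X" for j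
  proof -
    have "\<bar>\<Prod>k\<in>X-{j}. (x - k)\<bar> \<le> D ^ card (X - {j})" by (rule abs_prod_le) (use D in auto)
    thus ?thesis using fin card that by simp
  qed
  have "\<bar>poly (lint X R) x\<bar> = \<bar>\<Sum>j\<in>X. R j * poly (lagr X j) x\<bar>"
    by (simp add: lint_def poly_sum)
  also have "\<dots> \<le> (\<Sum>j\<in>X. \<bar>R j * poly (lagr X j) x\<bar>)" by (rule sum_abs)
  also have "\<dots> \<le> (\<Sum>j\<in>X. e*2^m*D^m)"
    by (intro sum_mono) (unfold poly_lagr, rule gen, auto intro: B0)
  also have "\<dots> = (real m + 1) * (e*2^m*D^m)" using card by simp
  finally show "\<bar>poly (lint X R) x\<bar> \<le> (real m + 1) * (e*2^m*D^m)" .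
  have B1: "\<bar>\<Sum>i\<in>X-{j}. \<Prod>k\<in>X-{j}-{i}. (x - k)\<bar> \<le> m * D^(m-1)" if "j \<in> X" for j
  proof -
    have "\<bar>\<Sum>i\<in>X-{j}. \<Prod>k\<in>X-{j}-{i}. (x - k)\<bar> \<le> (\<Sum>i\<in>X-{j}. \<bar>\<Prod>k\<in>X-{j}-{i}. (x - k)\<bar>)"
      by (rule sum_abs)
    also have "\<dots> \<le> (\<Sum>i\<in>X-{j}. D^(m-1))"
    proof (intro sum_mono)
      fix i assume i: "i \<in> X - {j}"
      have "\<bar>\<Prod>k\<in>X-{j}-{i}. (x - k)\<bar> \<le> D ^ card (X-{j}-{i})" by (rule abs_prod_le) (use D in auto)
      moreover have "card (X-{j}-{i}) = m - 1" using fin card that i by simp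
      ultimately show "\<bar>\<Prod>k\<in>X-{j}-{i}. (x - k)\<bar> \<le> D^(m-1)" by simp
    qed
    also have "\<dots> = m * D^(m-1)" using fin card that by simp
    finally show ?thesis .
  qed
  have "\<bar>poly (pderiv (lint X R)) x\<bar> = \<bar>\<Sum>j\<in>X. R j * poly (pderiv (lagr X j)) x\<bar>"
    by (simp add: lint_def poly_sum pderiv_sum pderiv_smult)
  also have "\<dots> \<le> (\<Sum>j\<in>X. \<bar>R j * poly (pderiv (lagr X j)) x\<bar>)" by (rule sum_abs)
  also have "\<dots> \<le> (\<Sum>j\<in>X. e*2^m*(m*D^(m-1)))"
    by (intro sum_mono) (unfold poly_pderiv_lagr, rule gen, assumption, rule B1, assumption)
  also have "\<dots> = (real m + 1) * (e*2^m*(m*D^(m-1)))" using card by simp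
  finally show "\<bar>poly (pderiv (lint X R)) x\<bar> \<le> (real m + 1) * (e*2^m*(m*D^(m-1)))" .
qed



lemma pint: "continuous_on {a..b} F \<Longrightarrow> F integrable_on {a..b}"
  for F :: "real \<Rightarrow> real"
  by (rule integrable_continuous_real)

lemma hi_const: "a \<le> b \<Longrightarrow> ((\<lambda>x. c) has_integral (c * (b - a))) {a..b}"
  for a b c :: real
  using has_integral_const_real[of c a b] by (simp add: mult.commute)

lemma poly_ftc:
  fixes p :: "real poly"
  assumes "a \<le> b"
  shows "((\<lambda>x. poly (pderiv p) x) has_integral (poly p b - poly p a)) {a..b}"
  by (rule fundamental_theorem_of_calculus[OF assms])
     (auto intro: has_field_derivative_at_within simp: has_real_derivative_iff_has_vector_derivative[symmetric])

lemma ftc_abs: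
  fixes p :: "real poly"
  assumes "a \<le> x" "x \<le> b"
  shows "\<bar>poly p x - poly p a\<bar> \<le> integral {a..b} (\<lambda>t. \<bar>poly (pderiv p) t\<bar>)"
proof -
  have "poly p x - poly p a = integral {a..x} (\<lambda>t. poly (pderiv p) t)"
    using poly_ftc[OF assms(1), of p] by (simp add: has_integral_integrable_integral)
  also have "\<bar>\<dots>\<bar> \<le> integral {a..x} (\<lambda>t. \<bar>poly (pderiv p) t\<bar>)"
  proof -
    have i1: "(\<lambda>t. poly (pderiv p) t) integrable_on {a..x}" by (auto intro!: pint continuous_intros)
    have i2: "(\<lambda>t. \<bar>poly (pderiv p) t\<bar>) integrable_on {a..x}" by (auto intro!: pint continuous_intros)
    show ?thesis using integral_norm_bound_integral[OF i1 i2] by simp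
  qed
  also have "\<dots> \<le> integral {a..b} (\<lambda>t. \<bar>poly (pderiv p) t\<bar>)"
    using assms by (intro integral_subset_le) (auto intro!: pint continuous_intros)
  finally show ?thesis .
qed

lemma diff_bound:
  fixes Tf Tg Uf Ug :: "real poly" and a b s r :: real
  assumes ab: "a \<le> b"
    and uf: "\<And>x. x \<in> {a..b} \<Longrightarrow> \<bar>poly Uf x\<bar> \<le> s" and uf': "\<And>x. x \<in> {a..b} \<Longrightarrow> \<bar>poly (pderiv Uf) x\<bar> \<le> r"
    and ug: "\<And>x. x \<in> {a..b} \<Longrightarrow> \<bar>poly Ug x\<bar> \<le> s" and ug': "\<And>x. x \<in> {a..b} \<Longrightarrow> \<bar>poly (pderiv Ug) x\<bar> \<le> r"
    and ufa: "poly Uf a = 0" and uga: "poly Ug a = 0"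
  defines "Sf \<equiv> integral {a..b} (\<lambda>x. \<bar>poly (pderiv Tf) x\<bar>)"
    and "Sg \<equiv> integral {a..b} (\<lambda>x. \<bar>poly (pderiv Tg) x\<bar>)"
  shows "abs ((integral {a..b} (\<lambda>x. poly (pderiv (Tf+Uf)) x * poly (Tg+Ug) x - poly (pderiv (Tg+Ug)) x * poly (Tf+Uf) x)
      - integral {a..b} (\<lambda>x. poly (pderiv Tf) x * poly Tg x - poly (pderiv Tg) x * poly Tf x))
      - (poly Tg a * poly Uf b - poly Tf a * poly Ug b))
     \<le> s*(Sf+Sg) + (b-a)*r*(Sf+Sg) + 2 * (b-a) * r * s"
proof -
  define W where "W x = poly (pderiv Tf) x * poly Ug x + poly (pderiv Uf) x * (poly Tg x - poly Tg a)
     + poly (pderiv Uf) x * poly Ug x - poly (pderiv Tg) x * poly Uf x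
     - poly (pderiv Ug) x * (poly Tf x - poly Tf a) - poly (pderiv Ug) x * poly Uf x" for x
  have pt: "poly (pderiv (Tf+Uf)) x * poly (Tg+Ug) x - poly (pderiv (Tg+Ug)) x * poly (Tf+Uf) x
      - (poly (pderiv Tf) x * poly Tg x - poly (pderiv Tg) x * poly Tf x)
      = W x + (poly Tg a * poly (pderiv Uf) x - poly Tf a * poly (pderiv Ug) x)" for x
    by (simp add: W_def pderiv_add algebra_simps)
  have i1: "((\<lambda>x. poly Tg a * poly (pderiv Uf) x - poly Tf a * poly (pderiv Ug) x) has_integral
      (poly Tg a * poly Uf b - poly Tf a * poly Ug b)) {a..b}"
    using has_integral_diff[OF has_integral_mult_right[OF poly_ftc[OF ab, of Uf]]
                               has_integral_mult_right[OF poly_ftc[OF ab, of Ug]]] ufa uga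
    by simp
  have "integral {a..b} (\<lambda>x. poly (pderiv (Tf+Uf)) x * poly (Tg+Ug) x - poly (pderiv (Tg+Ug)) x * poly (Tf+Uf) x)
      - integral {a..b} (\<lambda>x. poly (pderiv Tf) x * poly Tg x - poly (pderiv Tg) x * poly Tf x)
    = integral {a..b} (\<lambda>x. (poly (pderiv (Tf+Uf)) x * poly (Tg+Ug) x - poly (pderiv (Tg+Ug)) x * poly (Tf+Uf) x)
      - (poly (pderiv Tf) x * poly Tg x - poly (pderiv Tg) x * poly Tf x))"
    by (rule integral_diff[symmetric]) (auto intro!: pint continuous_intros)
  also have "\<dots> = integral {a..b} (\<lambda>x. W x + (poly Tg a * poly (pderiv Uf) x - poly Tf a * poly (pderiv Ug) x))"
    by (rule integral_cong) (rule pt)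
  also have "\<dots> = integral {a..b} W + (poly Tg a * poly Uf b - poly Tf a * poly Ug b)"
    using i1 by (subst integral_add) (auto simp: W_def intro!: pint continuous_intros simp: integral_unique has_integral_integrable)
  finally have eq: "(integral {a..b} (\<lambda>x. poly (pderiv (Tf+Uf)) x * poly (Tg+Ug) x - poly (pderiv (Tg+Ug)) x * poly (Tf+Uf) x)
      - integral {a..b} (\<lambda>x. poly (pderiv Tf) x * poly Tg x - poly (pderiv Tg) x * poly Tf x))
      - (poly Tg a * poly Uf b - poly Tf a * poly Ug b) = integral {a..b} W" by simp
  define B where "B x = \<bar>poly (pderiv Tf) x\<bar> * s + \<bar>poly (pderiv Tg) x\<bar> * s + (r * (Sf+Sg) + 2 * r * s)" for x
  have s0: "0 \<le> s" using uf[of a] ab by auto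
  have r0: "0 \<le> r" using uf'[of a] ab by auto
  have Sf: "\<bar>poly Tf x - poly Tf a\<bar> \<le> Sf" if "x \<in> {a..b}" for x
    unfolding Sf_def using that by (intro ftc_abs) auto
  have Sg: "\<bar>poly Tg x - poly Tg a\<bar> \<le> Sg" if "x \<in> {a..b}" for x
    unfolding Sg_def using that by (intro ftc_abs) auto
  have WB: "\<bar>W x\<bar> \<le> B x" if x: "x \<in> {a..b}" for x
  proof -
    have "\<bar>W x\<bar> \<le> \<bar>poly (pderiv Tf) x\<bar> * \<bar>poly Ug x\<bar> + \<bar>poly (pderiv Uf) x\<bar> * \<bar>poly Tg x - poly Tg a\<bar>
     + \<bar>poly (pderiv Uf) x\<bar> * \<bar>poly Ug x\<bar> + \<bar>poly (pderiv Tg) x\<bar> * \<bar>poly Uf x\<bar>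
     + \<bar>poly (pderiv Ug) x\<bar> * \<bar>poly Tf x - poly Tf a\<bar> + \<bar>poly (pderiv Ug) x\<bar> * \<bar>poly Uf x\<bar>"
      unfolding W_def by (simp add: abs_mult[symmetric])
    also have "\<dots> \<le> \<bar>poly (pderiv Tf) x\<bar> * s + r * Sg + r * s + \<bar>poly (pderiv Tg) x\<bar> * s + r * Sf + r * s"
      by (intro add_mono mult_mono) (use x uf uf' ug ug' Sf Sg s0 r0 in auto)
    also have "\<dots> = B x" by (simp add: B_def algebra_simps)
    finally show ?thesis .
  qed
  have intf: "(\<lambda>x. \<bar>poly (pderiv Tf) x\<bar>) integrable_on {a..b}" by (auto intro!: pint continuous_intros)
  have intg: "(\<lambda>x. \<bar>poly (pderiv Tg) x\<bar>) integrable_on {a..b}" by (auto intro!: pint continuous_intros)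
  have iB: "(B has_integral (Sf * s + Sg * s + (r * (Sf+Sg) + 2 * r * s) * (b - a))) {a..b}"
    unfolding B_def
    apply (intro has_integral_add has_integral_mult_left)
    using intf intg ab by (auto simp: Sf_def Sg_def intro: integrable_integral hi_const)
  have iW: "W integrable_on {a..b}" unfolding W_def by (auto intro!: pint continuous_intros)
  have "\<bar>integral {a..b} W\<bar> \<le> integral {a..b} B"
    using integral_norm_bound_integral[OF iW has_integral_integrable[OF iB]] WB by simp
  also have "\<dots> = Sf * s + Sg * s + (r * (Sf+Sg) + 2 * r * s) * (b - a)" using iB by (rule integral_unique)
  also have "\<dots> = s*(Sf+Sg) + (b-a)*r*(Sf+Sg) + 2 * (b-a) * r * s" by (simp add: algebra_simps)
  finally show ?thesis using eq by simp
qed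



definition Tpoly :: "nat \<Rightarrow> real \<Rightarrow> (real \<Rightarrow> real) \<Rightarrow> real poly" where
  "Tpoly m a \<phi> = (\<Sum>k\<le>m. smult ((deriv ^^ k) \<phi> a / fact k) ([:-a, 1:] ^ k))"

lemma taylorT_poly: "taylorT m a \<phi> = poly (Tpoly m a \<phi>)"
  by (rule ext) (simp add: Tpoly_def taylorT_def poly_sum)

lemma degree_Tpoly: "degree (Tpoly m a \<phi>) \<le> m"
  unfolding Tpoly_def
proof (intro degree_sum_le)
  fix k assume "k \<in> {..m}"
  hence "k \<le> m" by simp
  have "degree (smult ((deriv ^^ k) \<phi> a / fact k) ([:-a, 1:] ^ k)) \<le> degree ([:-a, 1:] ^ k)"
    by (rule degree_smult_le)
  also have "\<dots> \<le> degree [:-a, 1:] * k" by (rule degree_power_le)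
  also have "\<dots> \<le> m" using \<open>k \<le> m\<close> by simp
  finally show "degree (smult ((deriv ^^ k) \<phi> a / fact k) ([:-a, 1:] ^ k)) \<le> m" .
qed auto

lemma deriv_taylorT: "deriv (taylorT m a \<phi>) x = poly (pderiv (Tpoly m a \<phi>)) x"
  unfolding taylorT_poly by (rule DERIV_imp_deriv[OF poly_DERIV])

lemma taylorT_at: "taylorT m a \<phi> a = \<phi> a"
proof -
  have "taylorT m a \<phi> a = (\<Sum>k\<le>m. if k = 0 then \<phi> a else 0)"
    unfolding taylorT_def by (intro sum.cong) auto
  also have "\<dots> = \<phi> a" by simp
  finally show ?thesis .
qed

lemma unif_taylor:
  assumes Cm: "Cm m \<phi>" and m: "m > 0" and K: "bounded K" and e: "e > 0"
  shows "\<exists>\<rho>>0. \<forall>a\<in>K. \<forall>x. \<bar>x - a\<bar> < \<rho> \<longrightarrow> \<bar>\<phi> x - taylorT m a \<phi> x\<bar> \<le> e * \<bar>x - a\<bar> ^ m"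
proof -
  obtain B where B: "\<And>x. x \<in> K \<Longrightarrow> \<bar>x\<bar> \<le> B" using K unfolding bounded_pos by auto
  define S where "S = {-(B + 1)..B+1::real}"
  have "continuous_on S ((deriv ^^ m) \<phi>)"
    using Cm unfolding Cm_def by (auto intro: continuous_on_subset)
  hence "uniformly_continuous_on S ((deriv ^^ m) \<phi>)"
    unfolding S_def by (intro compact_uniformly_continuous) (auto simp: compact_Icc)
  moreover have "e * fact m > 0" using e by simp
  ultimately obtain d where d: "d > 0"
    and dd: "\<And>u v. u \<in> S \<Longrightarrow> v \<in> S \<Longrightarrow> dist v u < d \<Longrightarrow>
              dist ((deriv ^^ m) \<phi> v) ((deriv ^^ m) \<phi> u) < e * fact m"
    unfolding uniformly_continuous_on_def by blast
  have DER: "\<forall>k t. k < m \<and> min a x \<le> t \<and> t \<le> max a x \<longrightarrow>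
      DERIV ((deriv ^^ k) \<phi>) t :> (deriv ^^ Suc k) \<phi> t" for a x
  proof (intro allI impI)
    fix k t assume "k < m \<and> min a x \<le> t \<and> t \<le> max a x"
    hence "(deriv ^^ k) \<phi> differentiable (at t)" using Cm unfolding Cm_def by auto
    thus "DERIV ((deriv ^^ k) \<phi>) t :> (deriv ^^ Suc k) \<phi> t"
      by (simp add: DERIV_deriv_iff_real_differentiable)
  qed
  show ?thesis
  proof (intro exI[of _ "min d 1"] conjI ballI allI impI)
    show "min d 1 > 0" using d by simp
  next
    fix a x assume aK: "a \<in> K" and ax: "\<bar>x - a\<bar> < min d 1"
    show "\<bar>\<phi> x - taylorT m a \<phi> x\<bar> \<le> e * \<bar>x - a\<bar> ^ m"
    proof (cases "x = a")
      case True thus ?thesis using m e by (simp add: taylorT_at)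
    next
      case False
      obtain t where t: "(if x < a then x < t \<and> t < a else a < t \<and> t < x)"
        and tay: "\<phi> x = (\<Sum>k<m. ((deriv ^^ k) \<phi> a / fact k) * (x - a)^k) + ((deriv ^^ m) \<phi> t / fact m) * (x - a)^m"
      proof -
        have "\<exists>t. (if x < a then x < t \<and> t < a else a < t \<and> t < x) \<and>
          \<phi> x = (\<Sum>k<m. ((deriv ^^ k) \<phi> a / fact k) * (x - a)^k) + ((deriv ^^ m) \<phi> t / fact m) * (x - a)^m"
          by (rule Taylor[of m "\<lambda>k. (deriv ^^ k) \<phi>" \<phi> "min a x" "max a x" a x, OF m _ DER])
             (use False in \<open>simp_all\<close>)
        thus ?thesis using that by blast
      qed
      have T: "taylorT m a \<phi> x = (\<Sum>k<m. ((deriv ^^ k) \<phi> a / fact k) * (x - a)^k) + ((deriv ^^ m) \<phi> a / fact m) * (x - a)^m"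
      proof -
        have "{..m} = insert m {..<m}" by auto
        thus ?thesis unfolding taylorT_def by simp
      qed
      have "\<phi> x - taylorT m a \<phi> x = ((deriv ^^ m) \<phi> t - (deriv ^^ m) \<phi> a) / fact m * (x - a)^m"
        unfolding T by (subst tay) (simp add: diff_divide_distrib left_diff_distrib)
      moreover have "\<bar>(deriv ^^ m) \<phi> t - (deriv ^^ m) \<phi> a\<bar> < e * fact m"
      proof -
        have aS: "a \<in> S" using B[OF aK] unfolding S_def by auto
        have ta: "\<bar>t - a\<bar> \<le> \<bar>x - a\<bar>" using t by (auto split: if_splits)
        have tS: "t \<in> S" using B[OF aK] ta ax unfolding S_def by auto
        show ?thesis using dd[OF aS tS] ta ax by (simp add: dist_norm)
      qed
      ultimately have 1: "\<bar>\<phi> x - taylorT m a \<phi> x\<bar> = \<bar>(deriv ^^ m) \<phi> t - (deriv ^^ m) \<phi> a\<bar> / fact m * \<bar>x - a\<bar>^m"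
        by (simp add: abs_mult power_abs)
      have 2: "\<bar>(deriv ^^ m) \<phi> t - (deriv ^^ m) \<phi> a\<bar> / fact m \<le> e"
        using \<open>\<bar>(deriv ^^ m) \<phi> t - (deriv ^^ m) \<phi> a\<bar> < e * fact m\<close>
        by (simp add: divide_le_eq)
      show ?thesis unfolding 1 by (rule mult_right_mono[OF 2]) simp
    qed
  qed
qed



definition cc :: "nat \<Rightarrow> real" where "cc m = (real m + 1) * real m * 4^m"
definition C1 :: "nat \<Rightarrow> real" where "C1 m = 4^m + 2^(m+1) * cc m"
definition C2 :: "nat \<Rightarrow> real" where "C2 m = 8 * (cc m)^2"

lemma deriv_poly: "deriv (poly p) x = poly (pderiv p) x"
  for p :: "real poly"
  using DERIV_imp_deriv[OF poly_DERIV[of p x]] by simp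

lemma cc_ge1: "m > 0 \<Longrightarrow> cc m \<ge> 1"
proof -
  assume m: "m > 0"
  hence m1: "real m \<ge> 1" by simp
  have a: "(1::real) \<le> (real m + 1) * real m" using mult_mono[of 1 "real m + 1" 1 "real m"] m1 by simp
  have b: "(1::real) \<le> 4^m" by simp
  show ?thesis unfolding cc_def using mult_mono[OF a b] by simp
qed

lemma unif_bounds_arith:
  assumes m: "m > 0" and L: "L > 0" and e: "e \<ge> 0"
  shows "(real m + 1) * (e*2^m*(2*L)^m) \<le> cc m * e * L^m"
    and "(real m + 1) * (e*2^m*(real m*(2*L)^(m-1))) \<le> cc m * e * L^(m-1)"
proof -
  have four: "(2::real)^m * 2^m = 4^m" by (simp add: power_mult_distrib[symmetric])
  have "(real m + 1) * (e*2^m*(2*L)^m) = ((real m + 1) * 4^m) * (e * L^m)"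
    unfolding four[symmetric] by (simp add: power_mult_distrib mult_ac)
  also have "\<dots> \<le> ((real m + 1) * real m * 4^m) * (e * L^m)"
    using m e L by (intro mult_right_mono) auto
  finally show "(real m + 1) * (e*2^m*(2*L)^m) \<le> cc m * e * L^m" by (simp add: cc_def mult_ac)
  have "(2::real)^(m-1) \<le> 2^m" by (intro power_increasing) auto
  hence "(2::real)^m * 2^(m-1) \<le> 4^m"
    using mult_left_mono[of "(2::real)^(m-1)" "2^m" "2^m"] by (simp add: power_mult_distrib[symmetric])
  hence "((real m + 1) * real m * e * L^(m-1)) * (2^m * 2^(m-1)) \<le> ((real m + 1) * real m * e * L^(m-1)) * 4^m"
    using e L by (intro mult_left_mono) auto
  thus "(real m + 1) * (e*2^m*(real m*(2*L)^(m-1))) \<le> cc m * e * L^(m-1)"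
    by (simp add: cc_def power_mult_distrib mult_ac)
qed

lemma core:
  fixes f g h :: "real \<Rightarrow> real" and X :: "real set" and a b e \<epsilon> :: real
  assumes m: "m > 0" and ab: "a < b"
    and fin: "finite X" and card: "card X = m + 1" and aX: "a \<in> X" and bX: "b \<in> X"
    and Xsub: "\<And>k. k \<in> X \<Longrightarrow> a - (b - a)/2 \<le> k \<and> k \<le> b"
    and sep: "\<And>j k. j \<in> X \<Longrightarrow> k \<in> X \<Longrightarrow> j \<noteq> a \<Longrightarrow> k \<noteq> j \<Longrightarrow> \<bar>j - a\<bar>/2 \<le> \<bar>j - k\<bar>"
    and RF: "\<And>j. j \<in> X \<Longrightarrow> \<bar>f j - taylorT m a f j\<bar> \<le> e * \<bar>j - a\<bar>^m"
    and RG: "\<And>j. j \<in> X \<Longrightarrow> \<bar>g j - taylorT m a g j\<bar> \<le> e * \<bar>j - a\<bar>^m"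
    and e0: "0 \<le> e" and e1: "e \<le> 1"
    and disc: "\<bar>dA m X f g h a b / dV m X f g a b\<bar> < \<epsilon>"
  shows "\<bar>AVA m f g h a b / AVV m f g a b\<bar> \<le> \<epsilon> * C1 m + e * C2 m"
proof -
  define L where "L = b - a"
  have L: "L > 0" using ab by (simp add: L_def)
  define Tf where "Tf = Tpoly m a f"
  define Tg where "Tg = Tpoly m a g"
  define rf where "rf x = f x - poly Tf x" for x
  define rg where "rg x = g x - poly Tg x" for x
  define Uf where "Uf = lint X rf"
  define Ug where "Ug = lint X rg"
  define c where "c = cc m"
  have c1: "c \<ge> 1" using cc_ge1[OF m] by (simp add: c_def)
  define s where "s = c * e * L^m"
  define r where "r = c * e * L^(m-1)"
  have Lr: "L * r = s" unfolding r_def s_def using m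
    by (cases m) (auto simp: mult_ac)
  have s0: "s \<ge> 0" using c1 e0 L by (simp add: s_def)
  have rfa: "rf a = 0" by (simp add: rf_def Tf_def taylorT_poly[symmetric] taylorT_at)
  have rga: "rg a = 0" by (simp add: rg_def Tg_def taylorT_poly[symmetric] taylorT_at)
  have rfb: "\<bar>rf j\<bar> \<le> e * \<bar>j - a\<bar>^m" if "j \<in> X" for j
    using RF[OF that] by (simp add: rf_def Tf_def taylorT_poly)
  have rgb: "\<bar>rg j\<bar> \<le> e * \<bar>j - a\<bar>^m" if "j \<in> X" for j
    using RG[OF that] by (simp add: rg_def Tg_def taylorT_poly)
  have degT: "degree Tf \<le> m" "degree Tg \<le> m" by (simp_all add: Tf_def Tg_def degree_Tpoly)
  have degU: "degree Uf \<le> m" "degree Ug \<le> m"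
    using degree_lint[OF fin, of rf] degree_lint[OF fin, of rg] card by (simp_all add: Uf_def Ug_def)
  have intf: "interp m X f = Tf + Uf"
  proof -
    have "interp m X f = lint X f" by (rule interp_eq[OF fin card])
    also have "\<dots> = Tf + Uf"
    proof (rule poly_eqI_degree[of X])
      fix x assume "x \<in> X"
      thus "poly (lint X f) x = poly (Tf + Uf) x"
        using fin by (simp add: poly_lint Uf_def rf_def)
    next
      show "degree (lint X f) < card X" using degree_lint[OF fin, of f] card by simp
    next
      have "degree (Tf + Uf) \<le> m" using degT degU degree_add_le by blast
      thus "degree (Tf + Uf) < card X" using card by simp
    qed
    finally show ?thesis .
  qed
  have intg: "interp m X g = Tg + Ug"
  proof -
    have "interp m X g = lint X g" by (rule interp_eq[OF fin card])
    also have "\<dots> = Tg + Ug"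
    proof (rule poly_eqI_degree[of X])
      fix x assume "x \<in> X"
      thus "poly (lint X g) x = poly (Tg + Ug) x"
        using fin by (simp add: poly_lint Ug_def rg_def)
    next
      show "degree (lint X g) < card X" using degree_lint[OF fin, of g] card by simp
    next
      have "degree (Tg + Ug) \<le> m" using degT degU degree_add_le by blast
      thus "degree (Tg + Ug) < card X" using card by simp
    qed
    finally show ?thesis .
  qed
  have Dx: "\<bar>x - k\<bar> \<le> 2 * L" if "x \<in> {a..b}" "k \<in> X" for x k
  proof -
    have "a \<le> x" "x \<le> b" using that(1) by auto
    moreover have "a - (b-a)/2 \<le> k" "k \<le> b" using Xsub[OF that(2)] by auto
    ultimately show ?thesis unfolding L_def abs_le_iff by (auto simp: field_simps)
  qed
  have Ub: "\<bar>poly Uf x\<bar> \<le> s \<and> \<bar>poly (pderiv Uf) x\<bar> \<le> r \<and> \<bar>poly Ug x\<bar> \<le> s \<and> \<bar>poly (pderiv Ug) x\<bar> \<le> r"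
    if x: "x \<in> {a..b}" for x
  proof -
    note A = unif_bounds_arith[OF m L e0]
    have "\<bar>poly Uf x\<bar> \<le> (real m + 1) * (e*2^m*(2*L)^m)"
      unfolding Uf_def by (rule lint_bounds(1)[OF fin card rfa sep rfb e0 Dx[OF x]]) auto
    moreover have "\<bar>poly (pderiv Uf) x\<bar> \<le> (real m + 1) * (e*2^m*(real m*(2*L)^(m-1)))"
      unfolding Uf_def by (rule lint_bounds(2)[OF fin card rfa sep rfb e0 Dx[OF x]]) auto
    moreover have "\<bar>poly Ug x\<bar> \<le> (real m + 1) * (e*2^m*(2*L)^m)"
      unfolding Ug_def by (rule lint_bounds(1)[OF fin card rga sep rgb e0 Dx[OF x]]) auto
    moreover have "\<bar>poly (pderiv Ug) x\<bar> \<le> (real m + 1) * (e*2^m*(real m*(2*L)^(m-1)))"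
      unfolding Ug_def by (rule lint_bounds(2)[OF fin card rga sep rgb e0 Dx[OF x]]) auto
    ultimately show ?thesis using A unfolding s_def r_def c_def by linarith
  qed
  have iabs: "(\<lambda>x. \<bar>poly (pderiv p) x\<bar>) integrable_on {a..b}" for p :: "real poly"
    by (auto intro!: pint continuous_intros)
  define Sf where "Sf = integral {a..b} (\<lambda>x. \<bar>poly (pderiv Tf) x\<bar>)"
  define Sg where "Sg = integral {a..b} (\<lambda>x. \<bar>poly (pderiv Tg) x\<bar>)"
  have Sf0: "Sf \<ge> 0" unfolding Sf_def by (rule integral_nonneg[OF iabs]) auto
  have Sg0: "Sg \<ge> 0" unfolding Sg_def by (rule integral_nonneg[OF iabs]) auto
  have ufa: "poly Uf a = 0" using poly_lint[OF fin aX, of rf] rfa by (simp add: Uf_def)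
  have uga: "poly Ug a = 0" using poly_lint[OF fin aX, of rg] rga by (simp add: Ug_def)
  have ufb: "poly Uf b = f b - poly Tf b" using poly_lint[OF fin bX, of rf] by (simp add: Uf_def rf_def)
  have ugb: "poly Ug b = g b - poly Tg b" using poly_lint[OF fin bX, of rg] by (simp add: Ug_def rg_def)
  have fa: "poly Tf a = f a" by (simp add: Tf_def taylorT_poly[symmetric] taylorT_at)
  have ga: "poly Tg a = g a" by (simp add: Tg_def taylorT_poly[symmetric] taylorT_at)
  define ITT where "ITT = integral {a..b} (\<lambda>x. poly (pderiv Tf) x * poly Tg x - poly (pderiv Tg) x * poly Tf x)"
  define IPP where "IPP = integral {a..b} (\<lambda>x. poly (pderiv (Tf+Uf)) x * poly (Tg+Ug) x - poly (pderiv (Tg+Ug)) x * poly (Tf+Uf) x)"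
  have DB: "\<bar>(IPP - ITT) - (poly Tg a * poly Uf b - poly Tf a * poly Ug b)\<bar>
      \<le> s*(Sf+Sg) + L*r*(Sf+Sg) + 2 * L * r * s"
    unfolding IPP_def ITT_def Sf_def Sg_def L_def
    by (rule diff_bound) (use ab Ub ufa uga in auto)
  have AVA_eq: "AVA m f g h a b = h b - h a - 2 * ITT + 2 * f a * (g b - poly Tg b) - 2 * g a * (f b - poly Tf b)"
    unfolding AVA_def ITT_def Tf_def Tg_def taylorT_poly deriv_poly by simp
  have dA_eq: "dA m X f g h a b = h b - h a - 2 * IPP"
    unfolding dA_def IPP_def intf intg by simp
  have AdA: "\<bar>AVA m f g h a b - dA m X f g h a b\<bar> \<le> 2 * (s*(Sf+Sg) + L*r*(Sf+Sg) + 2 * L * r * s)"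
  proof -
    have "AVA m f g h a b - dA m X f g h a b = 2 * ((IPP - ITT) - (poly Tg a * poly Uf b - poly Tf a * poly Ug b))"
      unfolding AVA_eq dA_eq ufb ugb fa ga by (simp add: algebra_simps)
    thus ?thesis using DB by (simp add: abs_mult)
  qed
  define V where "V = AVV m f g a b"
  have V_eq: "V = L^(2*m) + L^m * (Sf + Sg)"
    unfolding V_def AVV_def Tf_def Tg_def taylorT_poly deriv_poly Sf_def Sg_def L_def
    by (subst integral_add[OF iabs iabs]) simp
  have Lm: "L^m > 0" using L by simp
  have V0: "V > 0" unfolding V_eq using Lm Sf0 Sg0 L by (intro add_pos_nonneg) auto
  define IP2 where "IP2 = integral {a..b} (\<lambda>x. \<bar>poly (pderiv (Tf+Uf)) x\<bar> + \<bar>poly (pderiv (Tg+Ug)) x\<bar>)"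
  have dV_eq: "dV m X f g a b = diameter X ^ (2*m) + diameter X ^ m * IP2"
    unfolding dV_def IP2_def intf intg by simp
  have IP2_int: "(\<lambda>x. \<bar>poly (pderiv (Tf+Uf)) x\<bar> + \<bar>poly (pderiv (Tg+Ug)) x\<bar>) integrable_on {a..b}"
    by (auto intro!: pint continuous_intros)
  have IP2_0: "IP2 \<ge> 0" unfolding IP2_def by (rule integral_nonneg[OF IP2_int]) auto
  have IP2_le: "IP2 \<le> Sf + Sg + 2 * s"
  proof -
    have hi: "((\<lambda>x. \<bar>poly (pderiv Tf) x\<bar> + \<bar>poly (pderiv Tg) x\<bar> + 2 * r) has_integral (Sf + Sg + 2 * r * (b - a))) {a..b}"
      unfolding Sf_def Sg_def
      by (intro has_integral_add integrable_integral iabs hi_const) (use ab in auto)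
    have "IP2 \<le> integral {a..b} (\<lambda>x. \<bar>poly (pderiv Tf) x\<bar> + \<bar>poly (pderiv Tg) x\<bar> + 2 * r)"
      unfolding IP2_def
    proof (rule integral_le[OF IP2_int has_integral_integrable[OF hi]])
      fix x assume x: "x \<in> {a..b}"
      have "\<bar>poly (pderiv (Tf+Uf)) x\<bar> \<le> \<bar>poly (pderiv Tf) x\<bar> + \<bar>poly (pderiv Uf) x\<bar>"
        by (simp add: pderiv_add abs_triangle_ineq)
      moreover have "\<bar>poly (pderiv (Tg+Ug)) x\<bar> \<le> \<bar>poly (pderiv Tg) x\<bar> + \<bar>poly (pderiv Ug) x\<bar>"
        by (simp add: pderiv_add abs_triangle_ineq)
      ultimately show "\<bar>poly (pderiv (Tf+Uf)) x\<bar> + \<bar>poly (pderiv (Tg+Ug)) x\<bar>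
          \<le> \<bar>poly (pderiv Tf) x\<bar> + \<bar>poly (pderiv Tg) x\<bar> + 2 * r"
        using Ub[OF x] by linarith
    qed
    also have "\<dots> = Sf + Sg + 2 * r * (b - a)" using hi by (rule integral_unique)
    also have "\<dots> = Sf + Sg + 2 * s"
    proof -
      have "2 * r * (b - a) = 2 * (L * r)" by (simp add: L_def mult_ac)
      thus ?thesis using Lr by simp
    qed
    finally show ?thesis .
  qed
  have bndX: "bounded X" using fin by (rule finite_imp_bounded)
  have diam_ge: "L \<le> diameter X"
    using diameter_bounded_bound[OF bndX aX bX] ab by (simp add: L_def dist_real_def)
  have diam_le: "diameter X \<le> 2 * L"
  proof (rule diameter_le)
    fix x y assume "x \<in> X" "y \<in> X"
    thus "norm (x - y) \<le> 2 * L" using Xsub[of x] Xsub[of y] unfolding L_def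
      by (auto simp: abs_le_iff field_simps)
  qed (use aX in auto)
  have e2: "e*e \<le> e" using mult_left_mono[OF e1 e0] by simp
  have cc2: "c \<le> c*c" using c1 by simp
  have L2m: "L^(2*m) = L^m * L^m" by (simp add: mult_2 power_add)
  have LS0: "L^m * (Sf+Sg) \<ge> 0" using Lm Sf0 Sg0 by simp
  have LmS: "L^m * (Sf+Sg) \<le> V" and L2V: "L^(2*m) \<le> V" using V_eq LS0 L by auto
  have ce0: "c * e \<ge> 0" using c1 e0 by simp
  have sS: "s*(Sf+Sg) \<le> c * e * V"
  proof -
    have "s*(Sf+Sg) = (c*e)*(L^m*(Sf+Sg))" by (simp add: s_def mult_ac)
    also have "\<dots> \<le> (c*e)*V" by (rule mult_left_mono[OF LmS ce0])
    finally show ?thesis .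
  qed
  have ss: "s * s \<le> c*c * e * V"
  proof -
    have "s * s = (c*c)*(e*e)*(L^m*L^m)" by (simp add: s_def mult_ac)
    also have "\<dots> = (c*c)*(e*e)*L^(2*m)" by (simp only: L2m)
    also have "\<dots> \<le> (c*c)*e*L^(2*m)"
      using e2 c1 L by (intro mult_right_mono mult_left_mono) auto
    also have "\<dots> \<le> (c*c)*e*V" using L2V c1 e0 by (intro mult_left_mono) auto
    finally show ?thesis .
  qed
  have AdA2: "\<bar>AVA m f g h a b - dA m X f g h a b\<bar> \<le> C2 m * e * V"
  proof -
    have "2 * (s*(Sf+Sg) + L*r*(Sf+Sg) + 2 * L * r * s) = 4 * (s*(Sf+Sg)) + 4 * (s * s)"
      using Lr by (simp add: algebra_simps)
    also have "\<dots> \<le> 4 * (c * e * V) + 4 * (c*c * e * V)" using sS ss by linarith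
    also have "\<dots> \<le> 4 * (c*c * e * V) + 4 * (c*c * e * V)"
    proof -
      have "c*(e*V) \<le> (c*c)*(e*V)" using cc2 e0 V0 by (intro mult_right_mono) auto
      thus ?thesis by (simp add: mult_ac)
    qed
    also have "\<dots> = C2 m * e * V" by (simp add: C2_def c_def power2_eq_square mult_ac)
    finally show ?thesis using AdA by linarith
  qed
  have d0: "diameter X \<ge> 0" using diam_ge L by linarith
  have dV_le: "dV m X f g a b \<le> C1 m * V"
  proof -
    have t1: "diameter X ^ (2*m) \<le> 4^m * L^(2*m)"
    proof -
      have "diameter X ^ (2*m) \<le> (2*L)^(2*m)" by (rule power_mono[OF diam_le d0])
      also have "\<dots> = 4^m * L^(2*m)" by (simp add: power_mult_distrib power_mult)
      finally show ?thesis .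
    qed
    have t2: "diameter X ^ m * IP2 \<le> (2^m * L^m) * (Sf + Sg + 2 * s)"
    proof -
      have "diameter X ^ m * IP2 \<le> (2*L)^m * (Sf + Sg + 2 * s)"
        by (intro mult_mono power_mono diam_le d0 IP2_le IP2_0) (use L in auto)
      thus ?thesis by (simp add: power_mult_distrib)
    qed
    have t3: "(2^m * L^m) * (Sf + Sg) \<le> 4^m * (L^m * (Sf+Sg))"
    proof -
      have "(2::real)^m \<le> 4^m" by (rule power_mono) auto
      hence "2^m * (L^m * (Sf+Sg)) \<le> 4^m * (L^m * (Sf+Sg))" using LS0 by (rule mult_right_mono)
      thus ?thesis by (simp add: mult_ac)
    qed
    have t4: "(2^m * L^m) * (2 * s) \<le> 2^(m+1) * c * L^(2*m)"
    proof -
      have "(2^m * L^m) * (2 * s) = (2^(m+1) * c * (L^m*L^m)) * e" by (simp add: s_def mult_ac)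
      also have "\<dots> = (2^(m+1) * c * L^(2*m)) * e" by (simp only: L2m)
      also have "\<dots> \<le> (2^(m+1) * c * L^(2*m)) * 1" using e1 c1 L by (intro mult_left_mono) auto
      finally show ?thesis by simp
    qed
    have t5: "2^(m+1) * c * L^(2*m) \<le> 2^(m+1) * c * V" using L2V c1 by (intro mult_left_mono) auto
    have "dV m X f g a b \<le> 4^m * L^(2*m) + 4^m * (L^m * (Sf+Sg)) + 2^(m+1) * c * V"
    proof -
      have dd: "(2^m * L^m) * (Sf + Sg + 2 * s) = (2^m * L^m) * (Sf + Sg) + (2^m * L^m) * (2 * s)"
        by (rule distrib_left)
      show ?thesis unfolding dV_eq using t1 t2 t3 t4 t5 dd by linarith
    qed
    also have "\<dots> = C1 m * V" by (simp add: C1_def c_def V_eq algebra_simps)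
    finally show ?thesis .
  qed
  have dV0: "dV m X f g a b > 0"
  proof -
    have "diameter X ^ (2*m) > 0" using diam_ge L by simp
    moreover have "diameter X ^ m * IP2 \<ge> 0" using d0 IP2_0 by simp
    ultimately show ?thesis unfolding dV_eq by linarith
  qed
  have eps0: "\<epsilon> > 0" using disc by linarith
  have dAb: "\<bar>dA m X f g h a b\<bar> \<le> \<epsilon> * C1 m * V"
  proof -
    have "\<bar>dA m X f g h a b\<bar> / dV m X f g a b < \<epsilon>" using disc dV0 by simp
    hence "\<bar>dA m X f g h a b\<bar> < \<epsilon> * dV m X f g a b" using dV0 by (simp add: divide_less_eq)
    also have "\<dots> \<le> \<epsilon> * (C1 m * V)" using dV_le eps0 by (intro mult_left_mono) auto
    finally show ?thesis by simp
  qed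
  have "\<bar>AVA m f g h a b\<bar> \<le> (\<epsilon> * C1 m + e * C2 m) * V"
    using dAb AdA2 by (simp add: algebra_simps)
  thus ?thesis using V0 unfolding V_def[symmetric] by (simp add: divide_le_eq)
qed



lemma lin_aux: "2*q < (p::real) \<Longrightarrow> p \<le> t + q \<Longrightarrow> 0 \<le> q \<Longrightarrow> p \<le> 2*t \<and> q \<le> 2*t"
  by (intro conjI; linarith)

lemma lin2: "p < q \<Longrightarrow> q \<le> t \<Longrightarrow> 0 \<le> p \<Longrightarrow> p/2 \<le> (t::real)"
  by linarith

lemma sep_help:
  fixes y z a :: real
  assumes "\<bar>z - a\<bar> < \<bar>y - a\<bar>/2"
  shows "\<bar>y - a\<bar>/2 \<le> \<bar>y - z\<bar>" and "\<bar>z - a\<bar>/2 \<le> \<bar>z - y\<bar>"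
proof -
  have t: "\<bar>y - a\<bar> \<le> \<bar>y - z\<bar> + \<bar>z - a\<bar>" by (rule order.trans[OF _ abs_triangle_ineq]) simp
  have "2 * \<bar>z - a\<bar> < \<bar>y - a\<bar>" using assms by simp
  hence "\<bar>y - a\<bar> \<le> 2 * \<bar>y - z\<bar>" using t lin_aux[of "\<bar>z - a\<bar>" "\<bar>y - a\<bar>" "\<bar>y - z\<bar>"] by simp
  thus "\<bar>y - a\<bar>/2 \<le> \<bar>y - z\<bar>" by simp
  have "\<bar>z - a\<bar> \<le> 2 * \<bar>y - z\<bar>" using t \<open>2 * \<bar>z - a\<bar> < \<bar>y - a\<bar>\<close> lin_aux[of "\<bar>z - a\<bar>" "\<bar>y - a\<bar>" "\<bar>y - z\<bar>"] by simp
  hence "\<bar>z - a\<bar> \<le> 2 * \<bar>z - y\<bar>" by (simp add: abs_minus_commute)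
  thus "\<bar>z - a\<bar>/2 \<le> \<bar>z - y\<bar>" by simp
qed

lemma build_nodes:
  fixes K :: "real set"
  assumes lim: "\<And>r. r > 0 \<Longrightarrow> \<exists>y\<in>K. y \<noteq> a \<and> \<bar>y - a\<bar> < r"
  shows "r > 0 \<Longrightarrow> \<exists>Y. Y \<subseteq> K \<and> finite Y \<and> card Y = n \<and> (\<forall>y\<in>Y. 0 < \<bar>y - a\<bar> \<and> \<bar>y - a\<bar> < r)
           \<and> (\<forall>y\<in>Y. \<forall>z\<in>Y. y \<noteq> z \<longrightarrow> \<bar>y - a\<bar>/2 \<le> \<bar>y - z\<bar>)"
proof (induction n arbitrary: r)
  case 0 thus ?case by (intro exI[of _ "{}"]) auto
next
  case (Suc n)
  obtain y where y: "y \<in> K" "y \<noteq> a" "\<bar>y - a\<bar> < r" using lim[OF Suc.prems] by auto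
  have "\<bar>y - a\<bar>/2 > 0" using y by simp
  from Suc.IH[OF this] obtain Y where Y: "Y \<subseteq> K" "finite Y" "card Y = n"
    "\<forall>z\<in>Y. 0 < \<bar>z - a\<bar> \<and> \<bar>z - a\<bar> < \<bar>y - a\<bar>/2"
    "\<forall>u\<in>Y. \<forall>v\<in>Y. u \<noteq> v \<longrightarrow> \<bar>u - a\<bar>/2 \<le> \<bar>u - v\<bar>" by blast
  have yY: "y \<notin> Y"
  proof
    assume "y \<in> Y"
    hence "\<bar>y - a\<bar> < \<bar>y - a\<bar>/2" using Y(4) by blast
    thus False by simp
  qed
  show ?case
  proof (intro exI[of _ "insert y Y"] conjI ballI impI)
    show "insert y Y \<subseteq> K" using Y y by auto
    show "finite (insert y Y)" using Y by simp
    show "card (insert y Y) = Suc n" using Y yY by simp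
  next
    fix z assume "z \<in> insert y Y"
    thus "0 < \<bar>z - a\<bar>" using Y(4) y by auto
  next
    fix z assume z: "z \<in> insert y Y"
    show "\<bar>z - a\<bar> < r"
    proof (cases "z = y")
      case True thus ?thesis using y by simp
    next
      case False
      hence "z \<in> Y" using z by auto
      hence "\<bar>z - a\<bar> < \<bar>y - a\<bar>/2" using Y(4) by auto
      moreover have "\<bar>y - a\<bar>/2 \<le> \<bar>y - a\<bar>" by simp
      ultimately show ?thesis using y(3) by linarith
    qed
  next
    fix u v assume u: "u \<in> insert y Y" and v: "v \<in> insert y Y" and uv: "u \<noteq> v"
    show "\<bar>u - a\<bar>/2 \<le> \<bar>u - v\<bar>"
    proof (cases "u = y")
      case True
      hence "v \<in> Y" using v uv by auto
      thus ?thesis using sep_help(1)[of v a y] Y(4) True by auto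
    next
      case False
      hence uY: "u \<in> Y" using u by auto
      show ?thesis
      proof (cases "v = y")
        case True thus ?thesis using sep_help(2)[of u a y] Y(4) uY by auto
      next
        case False thus ?thesis using Y(5) uY v uv by auto
      qed
    qed
  qed
qed

lemma iso_gap:
  fixes K :: "real set"
  assumes fin: "finite {x. x isolated_in K}"
  shows "\<exists>\<delta>>0. \<forall>a\<in>K. \<forall>b\<in>K. a < b \<and> b - a < \<delta> \<longrightarrow> (\<forall>r>0. \<exists>y\<in>K. y \<noteq> a \<and> \<bar>y - a\<bar> < r)"
proof -
  define I where "I = {x. x isolated_in K}"
  have "\<forall>x\<in>I. \<exists>\<rho>>0. \<forall>y\<in>K. y \<noteq> x \<longrightarrow> \<rho> \<le> \<bar>y - x\<bar>"
  proof
    fix x assume "x \<in> I"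
    then obtain T where T: "open T" "T \<inter> K = {x}" unfolding I_def isolated_in_def by auto
    hence "x \<in> T" by auto
    then obtain \<rho> where \<rho>: "\<rho> > 0" "ball x \<rho> \<subseteq> T" using T(1) open_contains_ball by blast
    have "\<forall>y\<in>K. y \<noteq> x \<longrightarrow> \<rho> \<le> \<bar>y - x\<bar>"
    proof (intro ballI impI)
      fix y assume "y \<in> K" "y \<noteq> x"
      hence "y \<notin> T" using T(2) by auto
      hence "y \<notin> ball x \<rho>" using \<rho>(2) by auto
      thus "\<rho> \<le> \<bar>y - x\<bar>" by (simp add: dist_real_def)
    qed
    thus "\<exists>\<rho>>0. \<forall>y\<in>K. y \<noteq> x \<longrightarrow> \<rho> \<le> \<bar>y - x\<bar>" using \<rho>(1) by blast
  qed
  then obtain rad where rad: "\<And>x. x \<in> I \<Longrightarrow> rad x > 0 \<and> (\<forall>y\<in>K. y \<noteq> x \<longrightarrow> rad x \<le> \<bar>y - x\<bar>)"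
    by metis
  define \<delta> where "\<delta> = Min (insert 1 (rad ` I))"
  have finI: "finite I" using fin by (simp add: I_def)
  have \<delta>0: "\<delta> > 0" unfolding \<delta>_def using finI rad by (subst Min_gr_iff) auto
  have \<delta>le: "\<delta> \<le> rad x" if "x \<in> I" for x unfolding \<delta>_def using finI that by (intro Min_le) auto
  show ?thesis
  proof (intro exI[of _ \<delta>] conjI ballI impI allI)
    show "\<delta> > 0" by (rule \<delta>0)
  next
    fix a b r assume aK: "a \<in> K" and bK: "b \<in> K" and ab: "a < b \<and> b - a < \<delta>" and r: "(r::real) > 0"
    have aI: "a \<notin> I"
    proof
      assume "a \<in> I"
      hence "rad a \<le> \<bar>b - a\<bar>" using rad[of a] bK ab by auto
      thus False using \<delta>le[OF \<open>a \<in> I\<close>] ab by auto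
    qed
    show "\<exists>y\<in>K. y \<noteq> a \<and> \<bar>y - a\<bar> < r"
    proof (rule ccontr)
      assume "\<not> ?thesis"
      hence "ball a r \<inter> K = {a}" using aK r by (auto simp: dist_real_def abs_minus_commute)
      hence "a isolated_in K" unfolding isolated_in_def using aK by blast
      thus False using aI by (simp add: I_def)
    qed
  qed
qed

lemma main_lemma:
  fixes f g h :: "real \<Rightarrow> real" and K :: "real set"
  assumes m: "m > 0" and Cf: "Cm m f" and Cg: "Cm m g" and K: "compact K"
    and disc: "discrete_AV_condition m f g h K"
    and NODES: "\<exists>\<delta>0>0. \<forall>a\<in>K. \<forall>b\<in>K. a < b \<and> b - a < \<delta>0 \<longrightarrow>
       (\<forall>r>0. \<exists>Y. Y \<subseteq> K \<and> finite Y \<and> card Y = m - 1 \<and> (\<forall>y\<in>Y. 0 < \<bar>y - a\<bar> \<and> \<bar>y - a\<bar> < r)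
           \<and> (\<forall>y\<in>Y. \<forall>z\<in>Y. y \<noteq> z \<longrightarrow> \<bar>y - a\<bar>/2 \<le> \<bar>y - z\<bar>))"
  shows "AV_condition m f g h K"
  unfolding AV_condition_def
proof (intro allI impI)
  fix \<epsilon>' :: real assume \<epsilon>': "\<epsilon>' > 0"
  obtain \<delta>0 where \<delta>0: "\<delta>0 > 0" and N: "\<And>a b r. a \<in> K \<Longrightarrow> b \<in> K \<Longrightarrow> a < b \<Longrightarrow> b - a < \<delta>0 \<Longrightarrow> r > 0 \<Longrightarrow>
      \<exists>Y. Y \<subseteq> K \<and> finite Y \<and> card Y = m - 1 \<and> (\<forall>y\<in>Y. 0 < \<bar>y - a\<bar> \<and> \<bar>y - a\<bar> < r)
           \<and> (\<forall>y\<in>Y. \<forall>z\<in>Y. y \<noteq> z \<longrightarrow> \<bar>y - a\<bar>/2 \<le> \<bar>y - z\<bar>)"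
    using NODES by blast
  have C1p: "C1 m > 0" using cc_ge1[OF m] by (simp add: C1_def add_pos_nonneg)
  have C2p: "C2 m > 0" using cc_ge1[OF m] by (simp add: C2_def)
  define \<epsilon> where "\<epsilon> = \<epsilon>' / (2 * C1 m)"
  define e where "e = min 1 (\<epsilon>' / (3 * C2 m))"
  have \<epsilon>0: "\<epsilon> > 0" using \<epsilon>' C1p by (simp add: \<epsilon>_def)
  have e0: "e > 0" using \<epsilon>' C2p by (simp add: e_def)
  have e1: "e \<le> 1" by (simp add: e_def)
  have \<epsilon>C: "\<epsilon> * C1 m = \<epsilon>' / 2" using C1p by (simp add: \<epsilon>_def)
  have eC: "e * C2 m \<le> \<epsilon>' / 3"
  proof -
    have "e \<le> \<epsilon>' / (3 * C2 m)" by (simp add: e_def)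
    hence "e * C2 m \<le> \<epsilon>' / (3 * C2 m) * C2 m" using C2p by (intro mult_right_mono) auto
    also have "\<dots> = \<epsilon>' / 3" using C2p by simp
    finally show ?thesis .
  qed
  obtain \<delta>d where \<delta>d: "\<delta>d > 0" and D: "\<And>X. X \<subseteq> K \<and> finite X \<and> card X = m + 1 \<and> diameter X < \<delta>d \<Longrightarrow>
      (\<forall>a\<in>X. \<forall>b\<in>X. a < b \<longrightarrow> \<bar>dA m X f g h a b / dV m X f g a b\<bar> < \<epsilon>)"
    using disc \<epsilon>0 unfolding discrete_AV_condition_def by meson
  have bK: "bounded K" using K by (rule compact_imp_bounded)
  obtain \<rho>f where \<rho>f: "\<rho>f > 0" and TF: "\<And>a x. a \<in> K \<Longrightarrow> \<bar>x - a\<bar> < \<rho>f \<Longrightarrow> \<bar>f x - taylorT m a f x\<bar> \<le> e * \<bar>x - a\<bar> ^ m"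
    using unif_taylor[OF Cf m bK e0] by blast
  obtain \<rho>g where \<rho>g: "\<rho>g > 0" and TG: "\<And>a x. a \<in> K \<Longrightarrow> \<bar>x - a\<bar> < \<rho>g \<Longrightarrow> \<bar>g x - taylorT m a g x\<bar> \<le> e * \<bar>x - a\<bar> ^ m"
    using unif_taylor[OF Cg m bK e0] by blast
  define \<delta> where "\<delta> = min (min (\<delta>d/2) \<delta>0) (min \<rho>f \<rho>g)"
  show "\<exists>\<delta>>0. \<forall>a\<in>K. \<forall>b\<in>K. 0 < b - a \<and> b - a < \<delta> \<longrightarrow> \<bar>AVA m f g h a b / AVV m f g a b\<bar> < \<epsilon>'"
  proof (intro exI[of _ \<delta>] conjI ballI impI)
    show "\<delta> > 0" using \<delta>d \<delta>0 \<rho>f \<rho>g by (simp add: \<delta>_def)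
  next
    fix a b assume aK: "a \<in> K" and bK: "b \<in> K" and abd: "0 < b - a \<and> b - a < \<delta>"
    define L where "L = b - a"
    have L: "L > 0" "L < \<delta>d/2" "L < \<delta>0" "L < \<rho>f" "L < \<rho>g" using abd by (auto simp: L_def \<delta>_def)
    have ab: "a < b" using abd by simp
    have bL: "b = a + L" by (simp add: L_def)
    have L2: "L/2 > 0" using L by simp
    obtain Y where Y: "Y \<subseteq> K" "finite Y" "card Y = m - 1" "\<forall>y\<in>Y. 0 < \<bar>y - a\<bar> \<and> \<bar>y - a\<bar> < L/2"
        "\<forall>y\<in>Y. \<forall>z\<in>Y. y \<noteq> z \<longrightarrow> \<bar>y - a\<bar>/2 \<le> \<bar>y - z\<bar>"
      using N[OF aK bK ab _ L2] L(3) unfolding L_def by blast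
    have Yb: "a - L/2 < y \<and> y < a + L/2 \<and> y \<noteq> a" if "y \<in> Y" for y
    proof -
      have h: "0 < \<bar>y - a\<bar>" "\<bar>y - a\<bar> < L/2" using Y(4) that by auto
      have h2: "y - a < L/2 \<and> -(y-a) < L/2" using h(2) by (simp only: abs_less_iff)
      have "y \<noteq> a" using h(1) by auto
      thus ?thesis using h2 by (intro conjI; linarith)
    qed
    define X where "X = insert a (insert b Y)"
    have aY: "a \<notin> Y" using Yb by blast
    have bY: "b \<notin> Y"
    proof
      assume "b \<in> Y"
      hence "b < a + L/2" using Yb by blast
      thus False using L(1) bL by linarith
    qed
    have finX: "finite X" using Y(2) by (simp add: X_def)
    have cardX: "card X = m + 1" using Y(2,3) aY bY ab m by (simp add: X_def)
    have XK: "X \<subseteq> K" using Y(1) aK bK by (simp add: X_def)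
    have aX: "a \<in> X" and bX: "b \<in> X" by (simp_all add: X_def)
    have Xsub': "a - L/2 \<le> k \<and> k \<le> b" if kX: "k \<in> X" for k
    proof -
      consider "k = a" | "k = b" | "k \<in> Y" using kX by (auto simp: X_def)
      thus ?thesis
      proof cases
        case 3 thus ?thesis using Yb[OF 3] L(1) bL by (intro conjI; linarith)
      qed (use L(1) bL in \<open>(intro conjI; linarith)+\<close>)
    qed
    have Xsub: "a - (b - a)/2 \<le> k \<and> k \<le> b" if "k \<in> X" for k
      using Xsub'[OF that] by (simp add: L_def)
    have diam: "diameter X < \<delta>d"
    proof -
      have "diameter X \<le> 3/2 * L"
      proof (rule diameter_le)
        fix x y assume "x \<in> X" "y \<in> X"
        hence "x - y \<le> 3/2 * L \<and> -(x - y) \<le> 3/2 * L" using Xsub'[of x] Xsub'[of y] bL L(1)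
          by (intro conjI; linarith)
        thus "norm (x - y) \<le> 3/2 * L" by (simp only: real_norm_def abs_le_iff)
      qed (use L in auto)
      thus ?thesis using L(2) \<delta>d by linarith
    qed
    have sep: "\<bar>j - a\<bar>/2 \<le> \<bar>j - k\<bar>" if j: "j \<in> X" and k: "k \<in> X" and ja: "j \<noteq> a" and kj: "k \<noteq> j" for j k
    proof -
      consider "j = b" | "j \<in> Y" using j ja by (auto simp: X_def)
      thus ?thesis
      proof cases
        case 1
        consider "k = a" | "k \<in> Y" using k kj 1 by (auto simp: X_def)
        thus ?thesis
        proof cases
          case 1 thus ?thesis using \<open>j = b\<close> ab by simp
        next
          case 2
          have "a - L/2 < k \<and> k < a + L/2" using Yb[OF 2] by blast
          hence "L/2 \<le> \<bar>b - k\<bar>" "\<bar>b - a\<bar> = L" using bL L(1) by (simp_all add: abs_if; linarith)+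
          thus ?thesis using \<open>j = b\<close> by simp
        qed
      next
        case 2
        note jY = Yb[OF 2]
        consider "k = a" | "k = b" | "k \<in> Y" using k by (auto simp: X_def)
        thus ?thesis
        proof cases
          case 1 thus ?thesis by simp
        next
          case 2
          have "\<bar>j - a\<bar> < L/2" using Y(4) \<open>j \<in> Y\<close> by blast
          moreover have "L/2 \<le> \<bar>j - b\<bar>" using jY bL L(1) by (simp add: abs_if; linarith)
          ultimately have "\<bar>j - a\<bar>/2 \<le> \<bar>j - b\<bar>" using abs_ge_zero[of "j - a"] by (rule lin2)
          thus ?thesis using \<open>k = b\<close> by simp
        next
          case 3
          have "j \<noteq> k" using kj by simp
          thus ?thesis using bspec[OF bspec[OF Y(5) \<open>j \<in> Y\<close>] 3] by simp
        qed
      qed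
    qed
    have near: "\<bar>j - a\<bar> < \<rho>f \<and> \<bar>j - a\<bar> < \<rho>g" if "j \<in> X" for j
    proof -
      have "a - L/2 \<le> j \<and> j \<le> b" by (rule Xsub'[OF that])
      hence "\<bar>j - a\<bar> \<le> L" using bL L(1) by (simp add: abs_le_iff; linarith)
      thus ?thesis using L by linarith
    qed
    have RF: "\<bar>f j - taylorT m a f j\<bar> \<le> e * \<bar>j - a\<bar>^m" if "j \<in> X" for j
      using TF[OF aK] near[OF that] by simp
    have RG: "\<bar>g j - taylorT m a g j\<bar> \<le> e * \<bar>j - a\<bar>^m" if "j \<in> X" for j
      using TG[OF aK] near[OF that] by simp
    have dsc: "\<bar>dA m X f g h a b / dV m X f g a b\<bar> < \<epsilon>"
      using D[of X] XK finX cardX diam aX bX ab by simp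
    have "\<bar>AVA m f g h a b / AVV m f g a b\<bar> \<le> \<epsilon> * C1 m + e * C2 m"
      by (rule core[OF m ab finX cardX aX bX Xsub sep RF RG _ e1 dsc]) (use e0 in auto)
    also have "\<dots> < \<epsilon>'" using \<epsilon>C eC \<epsilon>' by linarith
    finally show "\<bar>AVA m f g h a b / AVV m f g a b\<bar> < \<epsilon>'" .
  qed
qed

theorem lemma4p5:
  fixes m :: nat and f g h :: "real \<Rightarrow> real" and K :: "real set"
  assumes "m > 0" and "Cm m f" and "Cm m g" and "Cm m h"
  shows "(compact K \<and> (\<exists>Y\<subseteq>K. finite Y \<and> card Y = m + 1)
            \<and> finite {x. x isolated_in K}
            \<and> discrete_AV_condition m f g h K
          \<longrightarrow> AV_condition m f g h K)
       \<and> (m = 1 \<and> compact K \<and> (\<exists>Y\<subseteq>K. finite Y \<and> card Y = 2)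
            \<and> discrete_AV_condition m f g h K
          \<longrightarrow> AV_condition m f g h K)"
proof (intro conjI impI)
  assume H: "compact K \<and> (\<exists>Y\<subseteq>K. finite Y \<and> card Y = m + 1)
            \<and> finite {x. x isolated_in K} \<and> discrete_AV_condition m f g h K"
  obtain \<delta>0 where \<delta>0: "\<delta>0 > 0" and G: "\<And>a b. a \<in> K \<Longrightarrow> b \<in> K \<Longrightarrow> a < b \<and> b - a < \<delta>0 \<Longrightarrow>
      (\<forall>r>0. \<exists>y\<in>K. y \<noteq> a \<and> \<bar>y - a\<bar> < r)"
    using iso_gap[of K] H by blast
  have NODES: "\<exists>\<delta>0>0. \<forall>a\<in>K. \<forall>b\<in>K. a < b \<and> b - a < \<delta>0 \<longrightarrow>
       (\<forall>r>0. \<exists>Y. Y \<subseteq> K \<and> finite Y \<and> card Y = m - 1 \<and> (\<forall>y\<in>Y. 0 < \<bar>y - a\<bar> \<and> \<bar>y - a\<bar> < r)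
           \<and> (\<forall>y\<in>Y. \<forall>z\<in>Y. y \<noteq> z \<longrightarrow> \<bar>y - a\<bar>/2 \<le> \<bar>y - z\<bar>))"
  proof (intro exI[of _ \<delta>0] conjI ballI impI allI)
    show "\<delta>0 > 0" by (rule \<delta>0)
  next
    fix a b r assume a: "a \<in> K" and b: "b \<in> K" and ab: "a < b \<and> b - a < \<delta>0" and r: "(r::real) > 0"
    have lim: "\<And>r. r > 0 \<Longrightarrow> \<exists>y\<in>K. y \<noteq> a \<and> \<bar>y - a\<bar> < r" using G[OF a b ab] by blast
    show "\<exists>Y. Y \<subseteq> K \<and> finite Y \<and> card Y = m - 1 \<and> (\<forall>y\<in>Y. 0 < \<bar>y - a\<bar> \<and> \<bar>y - a\<bar> < r)
           \<and> (\<forall>y\<in>Y. \<forall>z\<in>Y. y \<noteq> z \<longrightarrow> \<bar>y - a\<bar>/2 \<le> \<bar>y - z\<bar>)"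
      by (rule build_nodes[OF lim r])
  qed
  show "AV_condition m f g h K"
    by (rule main_lemma[OF assms(1,2,3) _ _ NODES]) (use H in auto)
next
  assume H: "m = 1 \<and> compact K \<and> (\<exists>Y\<subseteq>K. finite Y \<and> card Y = 2) \<and> discrete_AV_condition m f g h K"
  have NODES: "\<exists>\<delta>0>0. \<forall>a\<in>K. \<forall>b\<in>K. a < b \<and> b - a < \<delta>0 \<longrightarrow>
       (\<forall>r>0. \<exists>Y. Y \<subseteq> K \<and> finite Y \<and> card Y = m - 1 \<and> (\<forall>y\<in>Y. 0 < \<bar>y - a\<bar> \<and> \<bar>y - a\<bar> < r)
           \<and> (\<forall>y\<in>Y. \<forall>z\<in>Y. y \<noteq> z \<longrightarrow> \<bar>y - a\<bar>/2 \<le> \<bar>y - z\<bar>))"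
    using H by (intro exI[of _ 1]) (auto intro!: exI[of _ "{}"])
  show "AV_condition m f g h K"
    by (rule main_lemma[OF assms(1,2,3) _ _ NODES]) (use H in auto)
qed


end
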